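(* Let $n\ge 2$ and $p\ge 2$ be integers, let $\kappa\in\{0,1\}$, and let $f^0,f^1\in\mathbb{R}^n$ with $f^0,f^1\ge 0$ componentwise and $\|f^0\|_1=\|f^1\|_1$. With the matrices $S_M,D_M,S_F,D_F$, the vectors $f_b^{+},f_b^{-}$ and the function $J$ defined in the context, the discrete dynamic transport problem $$\min_{m\in\mathbb{R}^{(n-\kappa)p},\ f\in\mathbb{R}^{n(p-1)},\ u,v\in\mathbb{R}^{np}} \|J(u,v)\|_1 \quad\text{subject to}\quad S_M m=u,\quad S_F f+f_b^{+}=v,\quad D_M m+D_F f=f_b^{-}$$ has a solution (a minimizer).
   Context: The unknowns are a discrete density $f=(f(j-\tfrac12,k))_{j=1,\dots,n;\,k=1,\dots,p-1}$ and a discrete momentum $m=(m(j,k-\tfrac12))_{j=\kappa,\dots,n-1;\,k=1,\dots,p}$, reordered columnwise (time index $k$ as outer block index) into vectors $f\in\mathbb{R}^{n(p-1)}$, $m\in\mathbb{R}^{(n-\kappa)p}$. Here $\kappa=1$ corresponds to Neumann and $\kappa=0$ to periodic spatial boundary conditions. $\otimes$ is the Kronecker product, $I_k$ the $k\times k$ identity, $0_k$ the zero vector of length $k$. Matrices: $S_p\in\mathbb{R}^{p-1,p}$ has $j$-th row $\tfrac12(e_j+e_{j+1})^{T}$; $D_p\in\mathbb{R}^{p-1,p}$ has $j$-th row $p(-e_j+e_{j+1})^{T}$, $j=1,\dots,p-1$. Analogously $S_n,D_n\in\mathbb{R}^{n-1,n}$ have $j$-th rows $\tfrac12(e_j+e_{j+1})^{T}$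 and $n(-e_j+e_{j+1})^{T}$. $S_{n,per}\in\mathbb{R}^{n,n}$ has first row $\tfrac12(e_1+e_n)^T$ and $j$-th row $\tfrac12(e_{j-1}+e_j)^T$ for $j=2,\dots,n$; $D_{n,per}\in\mathbb{R}^{n,n}$ has first row $n(-e_1+e_n)^T$ and $j$-th row $n(e_{j-1}-e_j)^T$ for $j=2,\dots,n$. Set $S_F:=S_p^{T}\otimes I_n$, $D_F:=-D_p^{T}\otimes I_n$, and $S_M:=I_p\otimes S_n^{T}$, $D_M:=I_p\otimes(-D_n^{T})$ in the Neumann case $\kappa=1$, while $S_M:=I_p\otimes S_{n,per}^{T}$, $D_M:=I_p\otimes D_{n,per}^{T}$ in the periodic case $\kappa=0$. Vectors: $f_b^{+}:=\tfrac12\big((f^0)^T,0_{n(p-2)}^T,(f^1)^T\big)^T\in\mathbb{R}^{np}$ and $f_b^{-}:=p\big((f^0)^T,0_{n(p-2)}^T,-(f^1)^T\big)^T\in\mathbb{R}^{np}$. $J$ acts componentwise: for $u,v\in\mathbb{R}^{np}$, $J(u,v)_i=\frac{u_i^2}{2v_i}$ if $v_i>0$, $J(u,v)_i=0$ if $(u_i,v_i)=(0,0)$, and $J(u,v)_i=+\infty$ otherwise; $\|J(u,v)\|_1=\sum_i J(u,v)_i$. *)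

theory Defs
  imports Complex_Main "HOL-Library.Extended_Real"
begin

text \<open>Conventions: vectors in R^N are functions nat => real, only the entries with
  index 0..N-1 are meaningful (0-based indexing). Matrices are functions
  nat => nat => real, entry (i,j) with 0-based row i and column j; the dimensions
  are carried explicitly where needed.\<close>

type_synonym rmat = "nat \<Rightarrow> nat \<Rightarrow> real"

definition mat_vec :: "rmat \<Rightarrow> nat \<Rightarrow> (nat \<Rightarrow> real) \<Rightarrow> (nat \<Rightarrow> real)" where
  "mat_vec A ncols x = (\<lambda>i. \<Sum>j<ncols. A i j * x j)"

definition mtrans :: "rmat \<Rightarrow> rmat" where
  "mtrans A = (\<lambda>i j. A j i)"

definition mneg :: "rmat \<Rightarrow> rmat" where
  "mneg A = (\<lambda>i j. - A i j)"

definition ident :: rmat where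
  "ident = (\<lambda>i j. if i = j then 1 else 0)"

definition kron :: "rmat \<Rightarrow> nat \<Rightarrow> nat \<Rightarrow> rmat \<Rightarrow> rmat" where
  "kron A rB cB B = (\<lambda>i j. A (i div rB) (j div cB) * B (i mod rB) (j mod cB))"

text \<open>S_k in R^{k-1,k}: row j is (e_j + e_{j+1})/2 (0-based).\<close>
definition Smat :: "nat \<Rightarrow> rmat" where
  "Smat k = (\<lambda>i j. if j = i \<or> j = i + 1 then 1/2 else 0)"

text \<open>D_k in R^{k-1,k}: row j is k(-e_j + e_{j+1}) (0-based).\<close>
definition Dmat :: "nat \<Rightarrow> rmat" where
  "Dmat k = (\<lambda>i j. if j = i then - real k else if j = i + 1 then real k else 0)"

text \<open>S_{n,per}: first row (e_1+e_n)/2, row j (e_{j-1}+e_j)/2 (here 0-based).\<close>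
definition Sper :: "nat \<Rightarrow> rmat" where
  "Sper n = (\<lambda>i j. if i = 0 then (if j = 0 \<or> j = n - 1 then 1/2 else 0)
                   else (if j = i - 1 \<or> j = i then 1/2 else 0))"

text \<open>D_{n,per}: first row n(-e_1+e_n), row j n(e_{j-1}-e_j) (here 0-based).\<close>
definition Dper :: "nat \<Rightarrow> rmat" where
  "Dper n = (\<lambda>i j. if i = 0 then (if j = 0 then - real n else if j = n - 1 then real n else 0)
                   else (if j = i - 1 then real n else if j = i then - real n else 0))"

definition SF :: "nat \<Rightarrow> nat \<Rightarrow> rmat" where
  "SF n p = kron (mtrans (Smat p)) n n ident"

definition DF :: "nat \<Rightarrow> nat \<Rightarrow> rmat" where
  "DF n p = kron (mneg (mtrans (Dmat p))) n n ident"

text \<open>S_M, D_M: Neumann case kappa = 1, periodic case kappa = 0.\<close>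
definition SM :: "nat \<Rightarrow> nat \<Rightarrow> nat \<Rightarrow> rmat" where
  "SM \<kappa> n p = (if \<kappa> = 1 then kron ident n (n - 1) (mtrans (Smat n))
                else kron ident n n (mtrans (Sper n)))"

definition DM :: "nat \<Rightarrow> nat \<Rightarrow> nat \<Rightarrow> rmat" where
  "DM \<kappa> n p = (if \<kappa> = 1 then kron ident n (n - 1) (mneg (mtrans (Dmat n)))
                else kron ident n n (mtrans (Dper n)))"

definition fbp :: "nat \<Rightarrow> nat \<Rightarrow> (nat \<Rightarrow> real) \<Rightarrow> (nat \<Rightarrow> real) \<Rightarrow> (nat \<Rightarrow> real)" where
  "fbp n p f0 f1 = (\<lambda>i. if i < n then f0 i / 2
                        else if (p - 1) * n \<le> i then f1 (i - (p - 1) * n) / 2 else 0)"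

definition fbm :: "nat \<Rightarrow> nat \<Rightarrow> (nat \<Rightarrow> real) \<Rightarrow> (nat \<Rightarrow> real) \<Rightarrow> (nat \<Rightarrow> real)" where
  "fbm n p f0 f1 = (\<lambda>i. if i < n then real p * f0 i
                        else if (p - 1) * n \<le> i then - (real p * f1 (i - (p - 1) * n)) else 0)"

definition Jc :: "real \<Rightarrow> real \<Rightarrow> ereal" where
  "Jc a b = (if b > 0 then ereal (a\<^sup>2 / (2 * b)) else if a = 0 \<and> b = 0 then 0 else \<infinity>)"

definition J1 :: "nat \<Rightarrow> (nat \<Rightarrow> real) \<Rightarrow> (nat \<Rightarrow> real) \<Rightarrow> ereal" where
  "J1 N u v = (\<Sum>i<N. Jc (u i) (v i))"

definition feasible :: "nat \<Rightarrow> nat \<Rightarrow> nat \<Rightarrow> (nat \<Rightarrow> real) \<Rightarrow> (nat \<Rightarrow> real)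
    \<Rightarrow> (nat \<Rightarrow> real) \<Rightarrow> (nat \<Rightarrow> real) \<Rightarrow> (nat \<Rightarrow> real) \<Rightarrow> (nat \<Rightarrow> real) \<Rightarrow> bool" where
  "feasible \<kappa> n p f0 f1 m f u v \<longleftrightarrow>
     (\<forall>i < n * p.
        mat_vec (SM \<kappa> n p) ((n - \<kappa>) * p) m i = u i \<and>
        mat_vec (SF n p) (n * (p - 1)) f i + fbp n p f0 f1 i = v i \<and>
        mat_vec (DM \<kappa> n p) ((n - \<kappa>) * p) m i + mat_vec (DF n p) (n * (p - 1)) f i
          = fbm n p f0 f1 i)"

end

theory Submission
  imports Defs "HOL-Analysis.Analysis"
begin

lemma sum_blocks:
  fixes g :: "nat \<Rightarrow> 'a::comm_monoid_add"
  shows "(\<Sum>j<c*p. g j) = (\<Sum>a<p. \<Sum>y<c. g (a*c+y))"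
proof (induction p)
  case 0 then show ?case by simp
next
  case (Suc p)
  have "(\<Sum>j<c*Suc p. g j) = (\<Sum>j<c*p + c. g j)" by (simp add: algebra_simps)
  also have "\<dots> = (\<Sum>j<c*p. g j) + (\<Sum>j=c*p..<c*p+c. g j)"
    using sum.atLeastLessThan_concat[of 0 "c*p" "c*p+c" g] by (simp add: lessThan_atLeast0)
  also have "(\<Sum>j=c*p..<c*p+c. g j) = (\<Sum>y<c. g (p*c+y))"
  proof -
    have "(\<Sum>j=c*p..<c*p+c. g j) = (\<Sum>y=0..<c. g (y + c*p))"
      using sum.shift_bounds_nat_ivl[of g 0 "c*p" c] by (simp add: add.commute)
    then show ?thesis by (simp add: lessThan_atLeast0 algebra_simps)
  qed
  finally show ?case using Suc by simp
qed

lemma kron_ident_mv: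
  assumes "x < r" "t < p" "0 < c"
  shows "mat_vec (kron ident r c B) (c*p) m (t*r+x) = mat_vec B c (\<lambda>y. m (t*c+y)) x"
proof -
  have "mat_vec (kron ident r c B) (c*p) m (t*r+x)
      = (\<Sum>a<p. \<Sum>y<c. ident t a * B x y * m (a*c+y))"
    unfolding mat_vec_def kron_def using assms
    by (simp add: sum_blocks)
  also have "\<dots> = (\<Sum>a<p. if a = t then (\<Sum>y<c. B x y * m (t*c+y)) else 0)"
    by (rule sum.cong) (auto simp: ident_def)
  also have "\<dots> = (\<Sum>y<c. B x y * m (t*c+y))" using assms by simp
  finally show ?thesis by (simp add: mat_vec_def)
qed

lemma kron_right_mv:
  assumes "x < n"
  shows "mat_vec (kron A n n ident) (n*q) f (t*n+x) = mat_vec A q (\<lambda>l. f (l*n+x)) t"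
proof -
  have "mat_vec (kron A n n ident) (n*q) f (t*n+x)
      = (\<Sum>l<q. \<Sum>y<n. A t l * ident x y * f (l*n+y))"
    unfolding mat_vec_def kron_def using assms
    by (simp add: sum_blocks)
  also have "\<dots> = (\<Sum>l<q. A t l * f (l*n+x))"
  proof (rule sum.cong)
    fix l assume "l \<in> {..<q}"
    have "(\<Sum>y<n. A t l * ident x y * f (l*n+y)) = (\<Sum>y<n. if y = x then A t l * f (l*n+y) else 0)"
      by (rule sum.cong) (auto simp: ident_def)
    then show "(\<Sum>y<n. A t l * ident x y * f (l*n+y)) = A t l * f (l*n+x)" using assms by simp
  qed simp
  finally show ?thesis by (simp add: mat_vec_def)
qed

lemma sum_shift2:
  fixes w :: "nat \<Rightarrow> real"
  assumes "x < Suc N"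
  shows "(\<Sum>y<N. (if x = y then a else if x = y+1 then b else 0) * w y)
       = (if x < N then a * w x else 0) + (if 0 < x then b * w (x-1) else 0)"
proof -
  have "(\<Sum>y<N. (if x = y then a else if x = y+1 then b else 0) * w y)
      = (\<Sum>y<N. (if y = x then a * w y else 0) + (if y = x - 1 \<and> 0 < x then b * w y else 0))"
    by (rule sum.cong) auto
  also have "\<dots> = (\<Sum>y<N. if y = x then a * w y else 0) + (\<Sum>y<N. if y = x - 1 \<and> 0 < x then b * w y else 0)"
    by (rule sum.distrib)
  also have "(\<Sum>y<N. if y = x - 1 \<and> 0 < x then b * w y else 0) = (if 0 < x then b * w (x-1) else 0)"
    using assms by (cases "0 < x") auto
  finally show ?thesis by simp
qed



definition SMloc :: "nat \<Rightarrow> nat \<Rightarrow> (nat\<Rightarrow>real) \<Rightarrow> nat \<Rightarrow> real" where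
 "SMloc \<kappa> n w x = (if \<kappa> = 1 then (if x < n-1 then w x/2 else 0) + (if 0<x then w(x-1)/2 else 0)
     else (w x + w (Suc x mod n))/2)"

definition DMloc :: "nat \<Rightarrow> nat \<Rightarrow> (nat\<Rightarrow>real) \<Rightarrow> nat \<Rightarrow> real" where
 "DMloc \<kappa> n w x = (if \<kappa> = 1 then (if x < n-1 then real n * w x else 0) - (if 0<x then real n * w(x-1) else 0)
     else real n * w (Suc x mod n) - real n * w x)"

definition Fext :: "nat \<Rightarrow> nat \<Rightarrow> (nat\<Rightarrow>real) \<Rightarrow> (nat\<Rightarrow>real) \<Rightarrow> (nat\<Rightarrow>real) \<Rightarrow> nat \<Rightarrow> nat \<Rightarrow> real" where
 "Fext n p f0 f1 f t x = (if t = 0 then f0 x else if t = p then f1 x else f ((t-1)*n + x))"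

lemma Suc_mod_eq: "x < n \<Longrightarrow> Suc x mod n = (if Suc x = n then 0 else Suc x)"
  by auto

lemma Sper_mv:
  fixes w :: "nat \<Rightarrow> real"
  assumes "2 \<le> n" "x < n"
  shows "mat_vec (mtrans (Sper n)) n w x = (w x + w (Suc x mod n))/2"
proof -
  have "mat_vec (mtrans (Sper n)) n w x
     = (\<Sum>y<n. (if y = x then w y / 2 else 0) + (if y = Suc x mod n then w y / 2 else 0))"
    unfolding mat_vec_def mtrans_def
  proof (rule sum.cong)
    fix y assume "y \<in> {..<n}"
    then show "Sper n y x * w y = (if y = x then w y / 2 else 0) + (if y = Suc x mod n then w y / 2 else 0)"
      using assms by (auto simp: Sper_def Suc_mod_eq)
  qed simp
  also have "\<dots> = w x / 2 + w (Suc x mod n) / 2"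
    using assms by (simp add: sum.distrib)
  finally show ?thesis by simp
qed

lemma Dper_mv:
  fixes w :: "nat \<Rightarrow> real"
  assumes "2 \<le> n" "x < n"
  shows "mat_vec (mtrans (Dper n)) n w x = real n * w (Suc x mod n) - real n * w x"
proof -
  have "mat_vec (mtrans (Dper n)) n w x
     = (\<Sum>y<n. (if y = Suc x mod n then real n * w y else 0) - (if y = x then real n * w y else 0))"
    unfolding mat_vec_def mtrans_def
  proof (rule sum.cong)
    fix y assume "y \<in> {..<n}"
    then show "Dper n y x * w y = (if y = Suc x mod n then real n * w y else 0) - (if y = x then real n * w y else 0)"
      using assms by (auto simp: Dper_def Suc_mod_eq)
  qed simp
  also have "\<dots> = real n * w (Suc x mod n) - real n * w x"
    using assms by (simp add: sum_subtractf)
  finally show ?thesis by simp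
qed

lemma Smat_mv:
  fixes w :: "nat \<Rightarrow> real"
  assumes "x < k" 
  shows "mat_vec (mtrans (Smat k)) (k-1) w x = (if x < k-1 then w x/2 else 0) + (if 0<x then w(x-1)/2 else 0)"
proof -
  have "mat_vec (mtrans (Smat k)) (k-1) w x = (\<Sum>y<k-1. (if x = y then 1/2 else if x = y+1 then 1/2 else 0) * w y)"
    unfolding mat_vec_def mtrans_def Smat_def by (rule sum.cong) auto
  also have "\<dots> = (if x < k-1 then 1/2 * w x else 0) + (if 0<x then 1/2 * w(x-1) else 0)" using assms by (subst sum_shift2) auto
  finally show ?thesis by simp
qed

lemma Dmat_mv:
  fixes w :: "nat \<Rightarrow> real"
  assumes "x < k" 
  shows "mat_vec (mneg (mtrans (Dmat k))) (k-1) w x = (if x < k-1 then real k * w x else 0) - (if 0<x then real k * w(x-1) else 0)"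
proof -
  have "mat_vec (mneg (mtrans (Dmat k))) (k-1) w x = (\<Sum>y<k-1. (if x = y then real k else if x = y+1 then - real k else 0) * w y)"
    unfolding mat_vec_def mtrans_def mneg_def Dmat_def by (rule sum.cong) auto
  also have "\<dots> = (if x < k-1 then real k * w x else 0) + (if 0<x then - real k * w(x-1) else 0)" using assms by (subst sum_shift2) auto
  finally show ?thesis by simp
qed

lemma SM_red:
  assumes "2 \<le> n" "\<kappa> \<in> {0,1}" "t < p" "x < n"
  shows "mat_vec (SM \<kappa> n p) ((n-\<kappa>)*p) m (t*n+x) = SMloc \<kappa> n (\<lambda>y. m (t*(n-\<kappa>)+y)) x"
proof (cases "\<kappa> = 1")
  case True
  have "mat_vec (SM \<kappa> n p) ((n-\<kappa>)*p) m (t*n+x) = mat_vec (mtrans (Smat n)) (n-1) (\<lambda>y. m(t*(n-1)+y)) x"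
    using kron_ident_mv[of x n t p "n-1"] assms True by (simp add: SM_def)
  then show ?thesis using Smat_mv[of x n "\<lambda>y. m(t*(n-1)+y)"] assms True by (simp add: SMloc_def)
next
  case False
  then have "\<kappa> = 0" using assms by auto
  have "mat_vec (SM \<kappa> n p) ((n-\<kappa>)*p) m (t*n+x) = mat_vec (mtrans (Sper n)) n (\<lambda>y. m(t*n+y)) x"
    using kron_ident_mv[of x n t p "n"] assms \<open>\<kappa> = 0\<close> by (simp add: SM_def)
  then show ?thesis using assms \<open>\<kappa> = 0\<close> by (simp add: SMloc_def Sper_mv)
qed

lemma DM_red:
  assumes "2 \<le> n" "\<kappa> \<in> {0,1}" "t < p" "x < n"
  shows "mat_vec (DM \<kappa> n p) ((n-\<kappa>)*p) m (t*n+x) = DMloc \<kappa> n (\<lambda>y. m (t*(n-\<kappa>)+y)) x"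
proof (cases "\<kappa> = 1")
  case True
  have "mat_vec (DM \<kappa> n p) ((n-\<kappa>)*p) m (t*n+x) = mat_vec (mneg (mtrans (Dmat n))) (n-1) (\<lambda>y. m(t*(n-1)+y)) x"
    using kron_ident_mv[of x n t p "n-1"] assms True by (simp add: DM_def)
  then show ?thesis using Dmat_mv[of x n "\<lambda>y. m(t*(n-1)+y)"] assms True by (simp add: DMloc_def)
next
  case False
  then have "\<kappa> = 0" using assms by auto
  have "mat_vec (DM \<kappa> n p) ((n-\<kappa>)*p) m (t*n+x) = mat_vec (mtrans (Dper n)) n (\<lambda>y. m(t*n+y)) x"
    using kron_ident_mv[of x n t p "n"] assms \<open>\<kappa> = 0\<close> by (simp add: DM_def)
  then show ?thesis using assms \<open>\<kappa> = 0\<close> by (simp add: DMloc_def Dper_mv)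
qed

lemma idx_lt_n: fixes x n t :: nat shows "x < n \<Longrightarrow> (t*n + x < n) = (t = 0)"
proof
  assume a: "x < n" "t * n + x < n"
  show "t = 0"
  proof (rule ccontr)
    assume "t \<noteq> 0"
    then have "1 * n \<le> t * n" by (intro mult_le_mono1) simp
    with a show False by simp
  qed
qed simp

lemma idx_ge: fixes x n t p :: nat shows "x < n \<Longrightarrow> ((p-1)*n \<le> t*n + x) = (p - 1 \<le> t)"
proof
  assume a: "x < n" "(p-1)*n \<le> t*n + x"
  show "p - 1 \<le> t"
  proof (rule ccontr)
    assume "\<not> p - 1 \<le> t"
    then have "Suc t \<le> p - 1" by simp
    then have "Suc t * n \<le> (p-1)*n" by (rule mult_le_mono1)
    with a show False by simp
  qed
next
  assume "x < n" "p - 1 \<le> t"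
  then show "(p-1)*n \<le> t*n + x" by (simp add: trans_le_add1)
qed

lemma SF_red:
  assumes "2 \<le> n" "2 \<le> p" "t < p" "x < n"
  shows "mat_vec (SF n p) (n*(p-1)) f (t*n+x) + fbp n p f0 f1 (t*n+x)
     = (Fext n p f0 f1 f t x + Fext n p f0 f1 f (Suc t) x)/2"
proof -
  have "mat_vec (SF n p) (n*(p-1)) f (t*n+x) = (if t < p-1 then f (t*n+x)/2 else 0) + (if 0<t then f((t-1)*n+x)/2 else 0)"
    using assms Smat_mv[of t p "\<lambda>l. f (l*n+x)"] by (simp add: SF_def kron_right_mv)
  moreover have "fbp n p f0 f1 (t*n+x) = (if t = 0 then f0 x / 2 else if t = p - 1 then f1 x / 2 else 0)"
    using assms idx_lt_n[of x n t] idx_ge[of x n p t] unfolding fbp_def by auto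
  ultimately show ?thesis using assms by (auto simp: Fext_def)
qed

lemma DF_red:
  assumes "2 \<le> n" "2 \<le> p" "\<kappa> \<in> {0,1}" "t < p" "x < n"
  shows "mat_vec (DM \<kappa> n p) ((n-\<kappa>)*p) m (t*n+x) + mat_vec (DF n p) (n*(p-1)) f (t*n+x) - fbm n p f0 f1 (t*n+x)
     = DMloc \<kappa> n (\<lambda>y. m (t*(n-\<kappa>)+y)) x + real p * (Fext n p f0 f1 f (Suc t) x - Fext n p f0 f1 f t x)"
proof -
  have e1: "mat_vec (DF n p) (n*(p-1)) f (t*n+x) = (if t < p-1 then real p * f (t*n+x) else 0) - (if 0<t then real p * f((t-1)*n+x) else 0)"
    using assms Dmat_mv[of t p "\<lambda>l. f (l*n+x)"] by (simp add: DF_def kron_right_mv)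
  have e2: "fbm n p f0 f1 (t*n+x) = (if t = 0 then real p * f0 x else if t = p - 1 then - (real p * f1 x) else 0)"
    using assms idx_lt_n[of x n t] idx_ge[of x n p t] unfolding fbm_def by auto
  have e3: "mat_vec (DM \<kappa> n p) ((n-\<kappa>)*p) m (t*n+x) = DMloc \<kappa> n (\<lambda>y. m (t*(n-\<kappa>)+y)) x"
    by (rule DM_red[OF assms(1,3,4,5)])
  show ?thesis unfolding e1 e2 e3 using assms by (auto simp: Fext_def algebra_simps)
qed



lemma idx_bound: fixes t n x p :: nat shows "t < p \<Longrightarrow> x < n \<Longrightarrow> t*n + x < n*p"
proof -
  assume "t < p" "x < n"
  then have "t*n + x < t*n + n" by simp
  also have "\<dots> = Suc t * n" by simp
  also have "\<dots> \<le> p * n" using \<open>t < p\<close> by (intro mult_le_mono1) simp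
  finally show ?thesis by (simp add: mult.commute)
qed

lemma feasible_red:
  assumes "feasible \<kappa> n p f0 f1 m f u v" "2 \<le> n" "2 \<le> p" "\<kappa> \<in> {0,1}" "t < p" "x < n"
  shows "u (t*n+x) = SMloc \<kappa> n (\<lambda>y. m (t*(n-\<kappa>)+y)) x"
    and "v (t*n+x) = (Fext n p f0 f1 f t x + Fext n p f0 f1 f (Suc t) x)/2"
    and "DMloc \<kappa> n (\<lambda>y. m (t*(n-\<kappa>)+y)) x + real p * (Fext n p f0 f1 f (Suc t) x - Fext n p f0 f1 f t x) = 0"
proof -
  have i: "t*n+x < n*p" using idx_bound assms by blast
  have c: "mat_vec (SM \<kappa> n p) ((n - \<kappa>) * p) m (t*n+x) = u (t*n+x)"
       "mat_vec (SF n p) (n * (p - 1)) f (t*n+x) + fbp n p f0 f1 (t*n+x) = v (t*n+x)"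
       "mat_vec (DM \<kappa> n p) ((n - \<kappa>) * p) m (t*n+x) + mat_vec (DF n p) (n * (p - 1)) f (t*n+x)
          = fbm n p f0 f1 (t*n+x)"
    using assms(1) i unfolding feasible_def by blast+
  show "u (t*n+x) = SMloc \<kappa> n (\<lambda>y. m (t*(n-\<kappa>)+y)) x"
    using c(1) SM_red[OF assms(2,4,5,6)] by simp
  show "v (t*n+x) = (Fext n p f0 f1 f t x + Fext n p f0 f1 f (Suc t) x)/2"
    by (metis c(2) SF_red[OF assms(2,3,5,6)])
  show "DMloc \<kappa> n (\<lambda>y. m (t*(n-\<kappa>)+y)) x + real p * (Fext n p f0 f1 f (Suc t) x - Fext n p f0 f1 f t x) = 0"
    using c(3) DF_red[OF assms(2,3,4,5,6), of m f f0 f1] by simp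
qed

lemma DMloc_sum:
  assumes "2 \<le> n" "\<kappa> \<in> {0,1}"
  shows "(\<Sum>x<n. DMloc \<kappa> n w x) = 0"
proof -
  obtain k where k: "n = Suc k" using assms by (cases n) auto
  show ?thesis
  proof (cases "\<kappa> = 1")
    case True
    have "(\<Sum>x<n. DMloc \<kappa> n w x) = (\<Sum>x<Suc k. (if x < k then real n * w x else 0)) - (\<Sum>x<Suc k. (if 0<x then real n * w(x-1) else 0))"
      unfolding DMloc_def using True k by (simp add: sum_subtractf)
    also have "(\<Sum>x<Suc k. (if x < k then real n * w x else 0)) = (\<Sum>x<k. real n * w x)"
      by (simp add: sum.lessThan_Suc)
    also have "(\<Sum>x<Suc k. (if 0<x then real n * w(x-1) else 0)) = (\<Sum>x<k. real n * w x)"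
      by (simp only: sum.lessThan_Suc_shift) simp
    finally show ?thesis by simp
  next
    case False
    then have "(\<Sum>x<n. DMloc \<kappa> n w x) = real n * (\<Sum>x<Suc k. w (Suc x mod Suc k)) - real n * (\<Sum>x<Suc k. w x)"
      unfolding DMloc_def using k by (simp add: sum_subtractf sum_distrib_left[symmetric])
    also have "(\<Sum>x<Suc k. w (Suc x mod Suc k)) = (\<Sum>x<Suc k. w x)"
    proof -
      have "(\<Sum>x<Suc k. w (Suc x mod Suc k)) = (\<Sum>x<k. w (Suc x)) + w 0"
        by (simp add: sum.lessThan_Suc)
      also have "\<dots> = (\<Sum>x<Suc k. w x)" by (subst sum.lessThan_Suc_shift) simp
      finally show ?thesis .
    qed
    finally show ?thesis by simp
  qed
qed

lemma DMloc_cong: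
  assumes "2 \<le> n" "\<kappa> \<in> {0,1}" "x < n" "\<And>y. y < n - \<kappa> \<Longrightarrow> w y = w' y"
  shows "DMloc \<kappa> n w x = DMloc \<kappa> n w' x"
  using assms by (auto simp: DMloc_def)

lemma sum_pred_split: "0 < x \<Longrightarrow> sum (h::nat\<Rightarrow>real) {..<x} = sum h {..<x - Suc 0} + h (x - Suc 0)"
  by (cases x) auto

lemma DMloc_solve:
  fixes h :: "nat \<Rightarrow> real"
  assumes "2 \<le> n" "\<kappa> \<in> {0,1}" "(\<Sum>z<n. h z) = 0" "x < n"
  shows "DMloc \<kappa> n (if \<kappa> = 1 then (\<lambda>y. (\<Sum>z<Suc y. h z) / real n) else (\<lambda>y. (\<Sum>z<y. h z) / real n)) x = h x"
proof -
  obtain k where k: "n = Suc k" using assms by (cases n) auto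
  have S: "(\<Sum>z<k. h z) = - h k" using assms(3) k by simp
  have nz: "real n \<noteq> 0" using assms by simp
  show ?thesis
  proof (cases "\<kappa> = 1")
    case True
    show ?thesis
    proof (cases "x < k")
      case True
      then show ?thesis using \<open>\<kappa> = 1\<close> assms k S nz by (auto simp: DMloc_def sum_pred_split)
    next
      case False
      then have "x = k" using assms k by simp
      then show ?thesis using \<open>\<kappa> = 1\<close> assms k S nz by (auto simp: DMloc_def sum_pred_split)
    qed
  next
    case False
    then show ?thesis using assms k S nz by (auto simp: DMloc_def Suc_mod_eq)
  qed
qed



lemma Jc_le:
  assumes "0 \<le> C"
  shows "Jc a b \<le> ereal C \<longleftrightarrow> (0 \<le> b \<and> a\<^sup>2 \<le> 2 * b * C)"
proof (cases "b > 0")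
  case True
  then show ?thesis by (simp add: Jc_def pos_divide_le_eq mult.commute)
next
  case False
  then show ?thesis using assms by (auto simp: Jc_def)
qed

lemma Jc_nonneg: "0 \<le> Jc a b"
  by (simp add: Jc_def)

lemma feasible_exists:
  fixes n p \<kappa> :: nat and f0 f1 :: "nat \<Rightarrow> real"
  assumes "n \<ge> 2" and "p \<ge> 2" and "\<kappa> \<in> {0, 1}"
    and "\<forall>i < n. f0 i \<ge> 0" and "\<forall>i < n. f1 i \<ge> 0"
    and "(\<Sum>i<n. \<bar>f0 i\<bar>) = (\<Sum>i<n. \<bar>f1 i\<bar>)"
  shows "\<exists>m f u v. feasible \<kappa> n p f0 f1 m f u v"
proof -
  define c where "c = n - \<kappa>"
  have c0: "0 < c" using assms unfolding c_def by auto
  define h where "h x = real p * (f0 x - f1 x)" for x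
  have hs: "(\<Sum>z<n. h z) = 0"
  proof -
    have "(\<Sum>i<n. f0 i) = (\<Sum>i<n. f1 i)" using assms(4,5,6) by simp
    then show ?thesis unfolding h_def by (simp add: sum_subtractf sum_distrib_left[symmetric])
  qed
  define g where "g = (if \<kappa> = 1 then (\<lambda>y. (\<Sum>z<Suc y. h z) / real n) else (\<lambda>y. (\<Sum>z<y. h z) / real n))"
  define m where "m j = (if j div c = p - 1 then g (j mod c) else 0)" for j
  define f where "f j = f0 (j mod n)" for j
  define u where "u = mat_vec (SM \<kappa> n p) ((n - \<kappa>) * p) m"
  define v where "v i = mat_vec (SF n p) (n * (p - 1)) f i + fbp n p f0 f1 i" for i
  have "feasible \<kappa> n p f0 f1 m f u v"
    unfolding feasible_def
  proof (intro allI impI conjI)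
    fix i assume i: "i < n * p"
    show "mat_vec (SM \<kappa> n p) ((n - \<kappa>) * p) m i = u i" by (simp add: u_def)
    show "mat_vec (SF n p) (n * (p - 1)) f i + fbp n p f0 f1 i = v i" by (simp add: v_def)
    define t where "t = i div n"
    define x where "x = i mod n"
    have ix: "i = t*n + x" unfolding t_def x_def by simp
    have x: "x < n" using assms unfolding x_def by simp
    have t: "t < p" using i unfolding t_def by (simp add: less_mult_imp_div_less mult.commute)
    have mb: "m (t*(n-\<kappa>)+y) = (if t = p - 1 then g y else 0)" if "y < n - \<kappa>" for y
      using that c0 unfolding m_def c_def by simp
    have Fx: "Fext n p f0 f1 f s x = (if s = p then f1 x else f0 x)" if "s \<le> p" for s
      using that x assms(2) unfolding Fext_def f_def by auto
    have D: "DMloc \<kappa> n (\<lambda>y. m (t*(n-\<kappa>)+y)) x + real p * (Fext n p f0 f1 f (Suc t) x - Fext n p f0 f1 f t x) = 0"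
    proof (cases "t = p - 1")
      case True
      have "DMloc \<kappa> n (\<lambda>y. m (t*(n-\<kappa>)+y)) x = DMloc \<kappa> n g x"
        using True mb by (intro DMloc_cong[OF assms(1,3) x]) auto
      also have "\<dots> = h x" unfolding g_def by (rule DMloc_solve[OF assms(1,3) hs x])
      finally have e: "DMloc \<kappa> n (\<lambda>y. m (t*(n-\<kappa>)+y)) x = h x" .
      have F1: "Fext n p f0 f1 f (Suc t) x = f1 x" using True assms Fx[of p] by simp
      have F2: "Fext n p f0 f1 f t x = f0 x" using t Fx[of t] by simp
      show ?thesis unfolding e F1 F2 h_def by (simp add: algebra_simps)
    next
      case False
      have "DMloc \<kappa> n (\<lambda>y. m (t*(n-\<kappa>)+y)) x = DMloc \<kappa> n (\<lambda>_. 0) x"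
        using False mb by (intro DMloc_cong[OF assms(1,3) x]) auto
      also have "\<dots> = 0" by (simp add: DMloc_def)
      finally have e: "DMloc \<kappa> n (\<lambda>y. m (t*(n-\<kappa>)+y)) x = 0" .
      have "Suc t \<noteq> p" using False by auto
      then show ?thesis using e t Fx[of t] Fx[of "Suc t"] by simp
    qed
    show "mat_vec (DM \<kappa> n p) ((n - \<kappa>) * p) m i + mat_vec (DF n p) (n * (p - 1)) f i = fbm n p f0 f1 i"
      using DF_red[OF assms(1,2,3) t x, of m f f0 f1] D unfolding ix by simp
  qed
  then show ?thesis by blast
qed



lemma mass:
  assumes "feasible \<kappa> n p f0 f1 m f u v" "2 \<le> n" "2 \<le> p" "\<kappa> \<in> {0,1}"
  shows "t \<le> p \<Longrightarrow> (\<Sum>x<n. Fext n p f0 f1 f t x) = (\<Sum>x<n. f0 x)"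
proof (induction t)
  case 0 then show ?case by (simp add: Fext_def)
next
  case (Suc t)
  then have t: "t < p" by simp
  have s0: "(\<Sum>x<n. DMloc \<kappa> n (\<lambda>y. m (t*(n-\<kappa>)+y)) x + real p * (Fext n p f0 f1 f (Suc t) x - Fext n p f0 f1 f t x)) = 0"
    using feasible_red(3)[OF assms t] by simp
  have "(\<Sum>x<n. DMloc \<kappa> n (\<lambda>y. m (t*(n-\<kappa>)+y)) x) + real p * ((\<Sum>x<n. Fext n p f0 f1 f (Suc t) x) - (\<Sum>x<n. Fext n p f0 f1 f t x)) = 0"
  proof -
    have "(\<Sum>x<n. real p * (Fext n p f0 f1 f (Suc t) x - Fext n p f0 f1 f t x)) = real p * ((\<Sum>x<n. Fext n p f0 f1 f (Suc t) x) - (\<Sum>x<n. Fext n p f0 f1 f t x))"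
      by (simp add: sum_distrib_left[symmetric] sum_subtractf)
    then show "?thesis" using s0 by (simp add: sum.distrib)
  qed
  then have "real p * ((\<Sum>x<n. Fext n p f0 f1 f (Suc t) x) - (\<Sum>x<n. Fext n p f0 f1 f t x)) = 0"
    using DMloc_sum[OF assms(2,4)] by simp
  then show ?case using Suc assms(3) by simp
qed

definition "Bf p M = (2 * real p + 1) * M"
definition "Bu M C = 2 * M * C + 1"
definition "Bm n p M C = 2 * real n * Bu M C + Bu M C + real p * Bf p M"

lemma abs_le_sq: fixes a K :: real shows "a\<^sup>2 \<le> K \<Longrightarrow> \<bar>a\<bar> \<le> K + 1"
proof -
  assume a: "a\<^sup>2 \<le> K"
  show ?thesis
  proof (cases "\<bar>a\<bar> \<le> 1")
    case True
    then show ?thesis using a by (smt (verit) zero_le_power2)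
  next
    case False
    then have "\<bar>a\<bar> * 1 \<le> \<bar>a\<bar> * \<bar>a\<bar>" by (intro mult_left_mono) auto
    then have "\<bar>a\<bar> \<le> \<bar>a\<bar> * \<bar>a\<bar>" by simp
    also have "\<dots> = a\<^sup>2" by (simp add: power2_eq_square abs_mult_self_eq)
    finally show ?thesis using a by simp
  qed
qed

lemma bounds:
  assumes feas: "feasible \<kappa> n p f0 f1 m f u v" and n: "2 \<le> n" and p: "2 \<le> p" and k: "\<kappa> \<in> {0,1}"
    and f0: "\<forall>i < n. f0 i \<ge> 0" and C: "0 \<le> C"
    and J: "\<forall>i<n*p. Jc (u i) (v i) \<le> ereal C"
  defines "M \<equiv> (\<Sum>x<n. f0 x)"
  shows "\<forall>j<(n-\<kappa>)*p. \<bar>m j\<bar> \<le> Bm n p M C" and "\<forall>j<n*(p-1). \<bar>f j\<bar> \<le> Bf p M"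
proof -
  have M0: "0 \<le> M" unfolding M_def using f0 by (intro sum_nonneg) auto
  have vu: "0 \<le> v (t*n+x) \<and> (u (t*n+x))\<^sup>2 \<le> 2 * v (t*n+x) * C" if "t < p" "x < n" for t x
    using J idx_bound[OF that] Jc_le[OF C] by blast
  have vsum: "(\<Sum>x<n. v (t*n+x)) = M" if "t < p" for t
  proof -
    have "(\<Sum>x<n. v (t*n+x)) = (\<Sum>x<n. (Fext n p f0 f1 f t x + Fext n p f0 f1 f (Suc t) x)/2)"
      by (rule sum.cong) (use feasible_red(2)[OF feas n p k that] in auto)
    also have "\<dots> = ((\<Sum>x<n. Fext n p f0 f1 f t x) + (\<Sum>x<n. Fext n p f0 f1 f (Suc t) x))/2"
      by (simp add: sum.distrib sum_divide_distrib[symmetric])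
    also have "\<dots> = M" using mass[OF feas n p k] that unfolding M_def by simp
    finally show ?thesis .
  qed
  have vM: "v (t*n+x) \<le> M" if "t < p" "x < n" for t x
  proof -
    have "v (t*n+x) \<le> (\<Sum>y<n. v (t*n+y))"
      using that vu by (intro member_le_sum[where f="\<lambda>y. v (t*n+y)"]) auto
    then show ?thesis using vsum that by simp
  qed
  have ub: "\<bar>u (t*n+x)\<bar> \<le> Bu M C" if "t < p" "x < n" for t x
  proof -
    have "(u (t*n+x))\<^sup>2 \<le> 2 * v (t*n+x) * C" using vu that by blast
    also have "\<dots> \<le> 2 * M * C" using vM[OF that] C by (simp add: mult_right_mono)
    finally show ?thesis unfolding Bu_def by (rule abs_le_sq)
  qed
  have Fb: "\<bar>Fext n p f0 f1 f t x\<bar> \<le> (2 * real t + 1) * M" if "t \<le> p" "x < n" for t x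
    using that(1)
  proof (induction t)
    case 0
    have "f0 x \<le> M" unfolding M_def using f0 that by (intro member_le_sum) auto
    then show ?case using f0 that by (simp add: Fext_def)
  next
    case (Suc t)
    then have t: "t < p" by simp
    have "Fext n p f0 f1 f (Suc t) x = 2 * v (t*n+x) - Fext n p f0 f1 f t x"
      using feasible_red(2)[OF feas n p k t that(2)] by simp
    moreover have "(2 * real (Suc t) + 1) * M = (2 * real t + 1) * M + 2 * M" by (simp add: algebra_simps)
    moreover have "\<bar>Fext n p f0 f1 f t x\<bar> \<le> (2 * real t + 1) * M" using Suc.IH t by simp
    ultimately show ?case using vu[OF t that(2)] vM[OF t that(2)] by (simp only:) (smt (verit))
  qed
  have Fb': "\<bar>Fext n p f0 f1 f t x\<bar> \<le> Bf p M" if "t \<le> p" "x < n" for t x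
  proof -
    have "(2 * real t + 1) * M \<le> (2 * real p + 1) * M" using that M0 by (intro mult_right_mono) auto
    then show ?thesis using Fb[OF that] unfolding Bf_def by simp
  qed
  show "\<forall>j<n*(p-1). \<bar>f j\<bar> \<le> Bf p M"
  proof (intro allI impI)
    fix j assume j: "j < n*(p-1)"
    define l where "l = j div n"
    define x where "x = j mod n"
    have x: "x < n" using n unfolding x_def by simp
    have l: "l < p - 1" using j unfolding l_def by (simp add: less_mult_imp_div_less mult.commute)
    have "Suc l \<noteq> p" using l by simp
    then have "Fext n p f0 f1 f (Suc l) x = f (l*n+x)" unfolding Fext_def by simp
    also have "l*n+x = j" unfolding l_def x_def by simp
    finally have "f j = Fext n p f0 f1 f (Suc l) x" by simp
    then show "\<bar>f j\<bar> \<le> Bf p M" using Fb'[of "Suc l" x] l x by simp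
  qed
  have mb: "\<bar>m (t*(n-\<kappa>)+y)\<bar> \<le> Bm n p M C" if t: "t < p" and y: "y < n - \<kappa>" for t y
  proof (cases "\<kappa> = 1")
    case True
    have rec: "\<bar>m (t*(n-\<kappa>)+y)\<bar> \<le> 2 * (real y + 1) * Bu M C" if "y < n - 1" for y
      using that
    proof (induction y)
      case 0
      have "u (t*n+0) = m (t*(n-\<kappa>)+0) / 2"
        using feasible_red(1)[OF feas n p k t, of 0] True 0 n by (simp add: SMloc_def)
      then show ?case using ub[OF t, of 0] n by simp
    next
      case (Suc y)
      have "u (t*n+Suc y) = m (t*(n-\<kappa>)+Suc y) / 2 + m (t*(n-\<kappa>)+y) / 2"
        using feasible_red(1)[OF feas n p k t, of "Suc y"] True Suc.prems by (simp add: SMloc_def)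
      then have "m (t*(n-\<kappa>)+Suc y) = 2 * u (t*n+Suc y) - m (t*(n-\<kappa>)+y)" by simp
      moreover have "\<bar>u (t*n+Suc y)\<bar> \<le> Bu M C" using ub[OF t, of "Suc y"] Suc.prems by simp
      moreover have "\<bar>m (t*(n-\<kappa>)+y)\<bar> \<le> 2 * (real y + 1) * Bu M C" using Suc by simp
      ultimately show ?case by (simp add: algebra_simps)
    qed
    have "2 * (real y + 1) * Bu M C \<le> 2 * real n * Bu M C"
      using y True M0 C by (intro mult_right_mono) (auto simp: Bu_def)
    moreover have "0 \<le> Bu M C" "0 \<le> Bf p M" using M0 C by (auto simp: Bu_def Bf_def)
    moreover have "0 \<le> real p * Bf p M" using \<open>0 \<le> Bf p M\<close> by simp
    moreover have "y < n - 1" using y True by simp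
    ultimately show ?thesis using rec[of y] unfolding Bm_def by linarith
  next
    case False
    then have k0: "\<kappa> = 0" using k by simp
    have y': "y < n" using y k0 by simp
    have e1: "u (t*n+y) = (m (t*n+y) + m (t*n + Suc y mod n))/2"
      using feasible_red(1)[OF feas n p k t y'] k0 by (simp add: SMloc_def)
    have e2: "real n * m (t*n + Suc y mod n) - real n * m (t*n+y) + real p * (Fext n p f0 f1 f (Suc t) y - Fext n p f0 f1 f t y) = 0"
      using feasible_red(3)[OF feas n p k t y'] k0 by (simp add: DMloc_def)
    have nz: "0 < real n" using n by simp
    have "m (t*n+y) = u (t*n+y) + real p * (Fext n p f0 f1 f (Suc t) y - Fext n p f0 f1 f t y) / (2 * real n)"
      using e1 e2 nz by (simp add: field_simps)
    moreover have "\<bar>u (t*n+y)\<bar> \<le> Bu M C" using ub[OF t y'] .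
    moreover have "\<bar>Fext n p f0 f1 f (Suc t) y\<bar> \<le> Bf p M" "\<bar>Fext n p f0 f1 f t y\<bar> \<le> Bf p M"
      using Fb' t y' by auto
    moreover have "0 \<le> Bu M C" "0 \<le> Bf p M" using M0 C by (auto simp: Bu_def Bf_def)
    ultimately have A: "\<bar>Fext n p f0 f1 f (Suc t) y - Fext n p f0 f1 f t y\<bar> \<le> 2 * Bf p M"
      and m_eq: "m (t*n+y) = u (t*n+y) + real p * (Fext n p f0 f1 f (Suc t) y - Fext n p f0 f1 f t y) / (2 * real n)"
      and U: "\<bar>u (t*n+y)\<bar> \<le> Bu M C" and B0: "0 \<le> Bu M C" "0 \<le> Bf p M" by linarith+
    have B: "\<bar>real p * (Fext n p f0 f1 f (Suc t) y - Fext n p f0 f1 f t y)\<bar> \<le> real p * (2 * Bf p M)"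
      using A by (simp add: abs_mult mult_left_mono)
    have "\<bar>real p * (Fext n p f0 f1 f (Suc t) y - Fext n p f0 f1 f t y) / (2 * real n)\<bar>
        \<le> real p * (2 * Bf p M) / 2"
      unfolding abs_divide using B B0 n by (intro frac_le) auto
    also have "\<dots> = real p * Bf p M" by simp
    finally have D: "\<bar>real p * (Fext n p f0 f1 f (Suc t) y - Fext n p f0 f1 f t y) / (2 * real n)\<bar> \<le> real p * Bf p M" .
    have "\<bar>m (t*n+y)\<bar> \<le> Bu M C + real p * Bf p M"
      unfolding m_eq using U D abs_triangle_ineq[of "u (t*n+y)" "real p * (Fext n p f0 f1 f (Suc t) y - Fext n p f0 f1 f t y) / (2 * real n)"]
      by linarith
    moreover have "0 \<le> 2 * real n * Bu M C" using B0 by simp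
    ultimately show ?thesis using k0 unfolding Bm_def by simp
  qed
  show "\<forall>j<(n-\<kappa>)*p. \<bar>m j\<bar> \<le> Bm n p M C"
  proof (intro allI impI)
    fix j assume j: "j < (n-\<kappa>)*p"
    define t where "t = j div (n-\<kappa>)"
    define y where "y = j mod (n-\<kappa>)"
    have c: "0 < n - \<kappa>" using n k by auto
    have y: "y < n - \<kappa>" using c unfolding y_def by simp
    have t: "t < p" using j unfolding t_def by (simp add: less_mult_imp_div_less mult.commute)
    have "j = t*(n-\<kappa>)+y" unfolding t_def y_def by (rule div_mult_mod_eq[symmetric])
    then show "\<bar>m j\<bar> \<le> Bm n p M C" using mb[OF t y] by simp
  qed
qed



lemma bw_finite:
  fixes X :: "nat \<Rightarrow> nat \<Rightarrow> real"
  assumes "\<forall>k. \<forall>i<N. \<bar>X k i\<bar> \<le> B"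
  shows "\<exists>r y. strict_mono r \<and> (\<forall>i<N. (\<lambda>k. X (r k) i) \<longlonglongrightarrow> y i)"
  using assms
proof (induction N)
  case 0
  have "strict_mono (id :: nat \<Rightarrow> nat)" by (simp add: strict_mono_def)
  then show ?case by blast
next
  case (Suc N)
  then obtain r y where r: "strict_mono r" and y: "\<forall>i<N. (\<lambda>k. X (r k) i) \<longlonglongrightarrow> y i" by auto
  have "bounded (range (\<lambda>k. X (r k) N))"
    unfolding bounded_iff using Suc.prems by auto
  then obtain l q where q: "strict_mono q" and l: "((\<lambda>k. X (r k) N) \<circ> q) \<longlonglongrightarrow> l"
    using bounded_imp_convergent_subsequence by blast
  have "strict_mono (r \<circ> q)" using r q by (rule strict_mono_o)
  moreover have "\<forall>i<Suc N. (\<lambda>k. X ((r \<circ> q) k) i) \<longlonglongrightarrow> (y(N := l)) i"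
  proof (intro allI impI)
    fix i assume "i < Suc N"
    show "(\<lambda>k. X ((r \<circ> q) k) i) \<longlonglongrightarrow> (y(N := l)) i"
    proof (cases "i = N")
      case True then show ?thesis using l by (simp add: comp_def)
    next
      case False
      then have "i < N" using \<open>i < Suc N\<close> by simp
      then have "((\<lambda>k. X (r k) i) \<circ> q) \<longlonglongrightarrow> y i" using y q LIMSEQ_subseq_LIMSEQ by blast
      then show ?thesis using False by (simp add: comp_def)
    qed
  qed
  ultimately show ?case by blast
qed

lemma mat_vec_tendsto:
  assumes "\<forall>j<N. (\<lambda>k. X k j) \<longlonglongrightarrow> Y j"
  shows "(\<lambda>k. mat_vec A N (X k) i) \<longlonglongrightarrow> mat_vec A N Y i"
  unfolding mat_vec_def using assms by (intro tendsto_sum tendsto_mult tendsto_const) auto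

lemma J1_nonneg: "0 \<le> J1 N u v"
  unfolding J1_def by (intro sum_nonneg) (simp add: Jc_nonneg)

lemma Jc_le_J1: "i < N \<Longrightarrow> Jc (u i) (v i) \<le> J1 N u v"
proof -
  assume i: "i < N"
  have "J1 N u v = Jc (u i) (v i) + (\<Sum>j\<in>{..<N} - {i}. Jc (u j) (v j))"
    unfolding J1_def using i by (simp add: sum.remove)
  moreover have "0 \<le> (\<Sum>j\<in>{..<N} - {i}. Jc (u j) (v j))" by (intro sum_nonneg) (simp add: Jc_nonneg)
  ultimately show ?thesis by (simp add: add_increasing2)
qed



theorem proposition1:
  fixes n p \<kappa> :: nat and f0 f1 :: "nat \<Rightarrow> real"
  assumes "n \<ge> 2" and "p \<ge> 2" and "\<kappa> \<in> {0, 1}"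
    and "\<forall>i < n. f0 i \<ge> 0" and "\<forall>i < n. f1 i \<ge> 0"
    and "(\<Sum>i<n. \<bar>f0 i\<bar>) = (\<Sum>i<n. \<bar>f1 i\<bar>)"
  shows "\<exists>m f u v. feasible \<kappa> n p f0 f1 m f u v \<and>
           (\<forall>m' f' u' v'. feasible \<kappa> n p f0 f1 m' f' u' v' \<longrightarrow>
                J1 (n * p) u v \<le> J1 (n * p) u' v')"
proof -
  obtain ma fa ua va where fa: "feasible \<kappa> n p f0 f1 ma fa ua va"
    using feasible_exists[OF assms] by blast
  define S where "S = {J1 (n*p) u v | m f u v. feasible \<kappa> n p f0 f1 m f u v}"
  define c where "c = Inf S"
  have low: "c \<le> J1 (n*p) u' v'" if "feasible \<kappa> n p f0 f1 m' f' u' v'" for m' f' u' v'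
    unfolding c_def S_def using that by (intro Inf_lower) blast
  show ?thesis
  proof (cases "c = \<infinity>")
    case True
    have "\<forall>m' f' u' v'. feasible \<kappa> n p f0 f1 m' f' u' v' \<longrightarrow> J1 (n * p) ua va \<le> J1 (n * p) u' v'"
    proof (intro allI impI)
      fix m' f' u' v' assume "feasible \<kappa> n p f0 f1 m' f' u' v'"
      then have "\<infinity> \<le> J1 (n * p) u' v'" using low True by metis
      then show "J1 (n * p) ua va \<le> J1 (n * p) u' v'" by simp
    qed
    then show ?thesis using fa by blast
  next
    case False
    have c0: "0 \<le> c" unfolding c_def S_def by (intro Inf_greatest) (auto simp: J1_nonneg)
    then obtain cr where cr: "c = ereal cr" "0 \<le> cr" using False by (cases c) auto
    have ex: "\<exists>m f u v. feasible \<kappa> n p f0 f1 m f u v \<and> J1 (n*p) u v < ereal (cr + inverse (real (Suc k)))" for k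
    proof -
      have "c < ereal (cr + inverse (real (Suc k)))" using cr by simp
      then obtain s where "s \<in> S" "s < ereal (cr + inverse (real (Suc k)))"
        unfolding c_def using Inf_less_iff by blast
      then show ?thesis unfolding S_def by blast
    qed
    then obtain Mq Fq Uq Vq where Q: "\<And>k. feasible \<kappa> n p f0 f1 (Mq k) (Fq k) (Uq k) (Vq k) \<and>
          J1 (n*p) (Uq k) (Vq k) < ereal (cr + inverse (real (Suc k)))"
      by metis
    define C where "C = cr + 1"
    have C0: "0 \<le> C" using cr unfolding C_def by simp
    have JC: "\<forall>i<n*p. Jc (Uq k i) (Vq k i) \<le> ereal C" for k
    proof (intro allI impI)
      fix i assume i: "i < n*p"
      have "inverse (real (Suc k)) \<le> 1" by (simp add: inverse_le_1_iff)
      then have "ereal (cr + inverse (real (Suc k))) \<le> ereal C" unfolding C_def by simp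
      then show "Jc (Uq k i) (Vq k i) \<le> ereal C"
        using Jc_le_J1[OF i, of "Uq k" "Vq k"] Q[of k] by (meson less_imp_le order_trans)
    qed
    define Mass where "Mass = (\<Sum>x<n. f0 x)"
    define Nm where "Nm = (n-\<kappa>)*p"
    define Nf where "Nf = n*(p-1)"
    have bM: "\<forall>j<Nm. \<bar>Mq k j\<bar> \<le> Bm n p Mass C" for k
      using bounds(1)[OF conjunct1[OF Q[of k]] assms(1,2,3,4) C0 JC[of k]] unfolding Mass_def Nm_def by blast
    have bF: "\<forall>j<Nf. \<bar>Fq k j\<bar> \<le> Bf p Mass" for k
      using bounds(2)[OF conjunct1[OF Q[of k]] assms(1,2,3,4) C0 JC[of k]] unfolding Mass_def Nf_def by blast
    define T where "T k i = real_of_ereal (Jc (Uq k i) (Vq k i))" for k i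
    have TJ: "Jc (Uq k i) (Vq k i) = ereal (T k i)" and T0: "0 \<le> T k i" and TC: "T k i \<le> C"
      if "i < n*p" for k i
    proof -
      have a: "Jc (Uq k i) (Vq k i) \<le> ereal C" using JC that by blast
      have b: "0 \<le> Jc (Uq k i) (Vq k i)" by (rule Jc_nonneg)
      from a b show "Jc (Uq k i) (Vq k i) = ereal (T k i)" unfolding T_def
        by (cases "Jc (Uq k i) (Vq k i)") auto
      from a b show "0 \<le> T k i" unfolding T_def
        by (cases "Jc (Uq k i) (Vq k i)") auto
      from a b show "T k i \<le> C" unfolding T_def
        by (cases "Jc (Uq k i) (Vq k i)") auto
    qed
    define X where "X k i = (if i < Nm then Mq k i else if i < Nm + Nf then Fq k (i - Nm) else T k (i - Nm - Nf))" for k i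
    define B where "B = \<bar>Bm n p Mass C\<bar> + \<bar>Bf p Mass\<bar> + \<bar>C\<bar>"
    have XB: "\<forall>k. \<forall>i<Nm+Nf+n*p. \<bar>X k i\<bar> \<le> B"
    proof (intro allI impI)
      fix k i assume i: "i < Nm + Nf + n*p"
      show "\<bar>X k i\<bar> \<le> B"
      proof (cases "i < Nm")
        case True then show ?thesis using bM[of k] unfolding X_def B_def by force
      next
        case F1: False
        show ?thesis
        proof (cases "i < Nm + Nf")
          case True
          then have "i - Nm < Nf" using F1 by simp
          then show ?thesis using bF[of k] F1 True unfolding X_def B_def by force
        next
          case False
          then have "i - Nm - Nf < n*p" using i by simp
          then show ?thesis using T0[of "i - Nm - Nf" k] TC[of "i - Nm - Nf" k] F1 False unfolding X_def B_def by auto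
        qed
      qed
    qed
    obtain r y where r: "strict_mono r" and y: "\<forall>i<Nm+Nf+n*p. (\<lambda>k. X (r k) i) \<longlonglongrightarrow> y i"
      using bw_finite[OF XB] by blast
    define m where "m j = y j" for j
    define f where "f j = y (Nm + j)" for j
    define t where "t i = y (Nm + Nf + i)" for i
    have mlim: "\<forall>j<Nm. (\<lambda>k. Mq (r k) j) \<longlonglongrightarrow> m j"
    proof (intro allI impI)
      fix j assume j: "j < Nm"
      then have "(\<lambda>k. X (r k) j) \<longlonglongrightarrow> y j" using y by simp
      then show "(\<lambda>k. Mq (r k) j) \<longlonglongrightarrow> m j" using j unfolding X_def m_def by simp
    qed
    have flim: "\<forall>j<Nf. (\<lambda>k. Fq (r k) j) \<longlonglongrightarrow> f j"
    proof (intro allI impI)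
      fix j assume j: "j < Nf"
      then have "(\<lambda>k. X (r k) (Nm + j)) \<longlonglongrightarrow> y (Nm + j)" using y by simp
      then show "(\<lambda>k. Fq (r k) j) \<longlonglongrightarrow> f j" using j unfolding X_def f_def by simp
    qed
    have tlim: "\<forall>i<n*p. (\<lambda>k. T (r k) i) \<longlonglongrightarrow> t i"
    proof (intro allI impI)
      fix i assume i: "i < n*p"
      then have "(\<lambda>k. X (r k) (Nm + Nf + i)) \<longlonglongrightarrow> y (Nm + Nf + i)" using y by simp
      then show "(\<lambda>k. T (r k) i) \<longlonglongrightarrow> t i" using i unfolding X_def t_def by simp
    qed
    define u where "u = mat_vec (SM \<kappa> n p) Nm m"
    define v where "v i = mat_vec (SF n p) Nf f i + fbp n p f0 f1 i" for i
    have feq: "\<And>k i. i < n*p \<Longrightarrow> mat_vec (SM \<kappa> n p) Nm (Mq k) i = Uq k i \<and>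
        mat_vec (SF n p) Nf (Fq k) i + fbp n p f0 f1 i = Vq k i \<and>
        mat_vec (DM \<kappa> n p) Nm (Mq k) i + mat_vec (DF n p) Nf (Fq k) i = fbm n p f0 f1 i"
      using Q unfolding feasible_def Nm_def Nf_def by blast
    have ulim: "(\<lambda>k. Uq (r k) i) \<longlonglongrightarrow> u i" if "i < n*p" for i
    proof -
      have "(\<lambda>k. mat_vec (SM \<kappa> n p) Nm (Mq (r k)) i) \<longlonglongrightarrow> u i"
        unfolding u_def by (rule mat_vec_tendsto[OF mlim])
      then show ?thesis using feq[OF that] by simp
    qed
    have vlim: "(\<lambda>k. Vq (r k) i) \<longlonglongrightarrow> v i" if "i < n*p" for i
    proof -
      have "(\<lambda>k. mat_vec (SF n p) Nf (Fq (r k)) i + fbp n p f0 f1 i) \<longlonglongrightarrow> v i"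
        unfolding v_def by (intro tendsto_add mat_vec_tendsto[OF flim] tendsto_const)
      then show ?thesis using feq[OF that] by simp
    qed
    have feas: "feasible \<kappa> n p f0 f1 m f u v"
      unfolding feasible_def
    proof (intro allI impI conjI)
      fix i assume i: "i < n*p"
      show "mat_vec (SM \<kappa> n p) ((n - \<kappa>) * p) m i = u i" unfolding u_def Nm_def ..
      show "mat_vec (SF n p) (n * (p - 1)) f i + fbp n p f0 f1 i = v i" unfolding v_def Nf_def ..
      have "(\<lambda>k. mat_vec (DM \<kappa> n p) Nm (Mq (r k)) i + mat_vec (DF n p) Nf (Fq (r k)) i)
          \<longlonglongrightarrow> mat_vec (DM \<kappa> n p) Nm m i + mat_vec (DF n p) Nf f i"
        by (intro tendsto_add mat_vec_tendsto[OF mlim] mat_vec_tendsto[OF flim])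
      then have "(\<lambda>k. fbm n p f0 f1 i) \<longlonglongrightarrow> mat_vec (DM \<kappa> n p) Nm m i + mat_vec (DF n p) Nf f i"
        using feq[OF i] by simp
      then show "mat_vec (DM \<kappa> n p) ((n - \<kappa>) * p) m i + mat_vec (DF n p) (n * (p - 1)) f i = fbm n p f0 f1 i"
        unfolding Nm_def Nf_def using LIMSEQ_unique tendsto_const by metis
    qed
    have Jt: "Jc (u i) (v i) \<le> ereal (t i)" if i: "i < n*p" for i
    proof -
      have ev: "0 \<le> Vq (r k) i \<and> (Uq (r k) i)\<^sup>2 \<le> 2 * Vq (r k) i * T (r k) i" for k
        using Jc_le[OF T0[OF i, of "r k"], of "Uq (r k) i" "Vq (r k) i"] TJ[OF i, of "r k"] by simp
      have t0: "0 \<le> t i"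
        using tlim i T0[OF i] by (intro tendsto_le[OF trivial_limit_sequentially, of "\<lambda>k. T (r k) i" _ "\<lambda>k. 0"]) auto
      have v0: "0 \<le> v i"
        using vlim[OF i] ev by (intro tendsto_le[OF trivial_limit_sequentially, of "\<lambda>k. Vq (r k) i" _ "\<lambda>k. 0"]) auto
      have uv: "(u i)\<^sup>2 \<le> 2 * v i * t i"
      proof (rule tendsto_le[OF trivial_limit_sequentially])
        show "(\<lambda>k. 2 * Vq (r k) i * T (r k) i) \<longlonglongrightarrow> 2 * v i * t i"
          using vlim[OF i] tlim i by (intro tendsto_intros) auto
        show "(\<lambda>k. (Uq (r k) i)\<^sup>2) \<longlonglongrightarrow> (u i)\<^sup>2"
          using ulim[OF i] by (intro tendsto_intros)
        show "\<forall>\<^sub>F k in sequentially. (Uq (r k) i)\<^sup>2 \<le> 2 * Vq (r k) i * T (r k) i"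
          using ev by simp
      qed
      show ?thesis using Jc_le[OF t0] v0 uv by simp
    qed
    have sumt: "(\<Sum>i<n*p. t i) \<le> cr"
    proof (rule tendsto_le[OF trivial_limit_sequentially])
      show "(\<lambda>k. \<Sum>i<n*p. T (r k) i) \<longlonglongrightarrow> (\<Sum>i<n*p. t i)"
        using tlim by (intro tendsto_sum) auto
      have "(\<lambda>k. cr + inverse (real (Suc k))) \<longlonglongrightarrow> cr + 0"
        by (intro tendsto_add tendsto_const LIMSEQ_inverse_real_of_nat)
      then have "((\<lambda>k. cr + inverse (real (Suc k))) \<circ> r) \<longlonglongrightarrow> cr"
        using r LIMSEQ_subseq_LIMSEQ by fastforce
      then show "(\<lambda>k. cr + inverse (real (Suc (r k)))) \<longlonglongrightarrow> cr" by (simp add: comp_def)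
      show "\<forall>\<^sub>F k in sequentially. (\<Sum>i<n*p. T (r k) i) \<le> cr + inverse (real (Suc (r k)))"
      proof (rule always_eventually, rule allI)
        fix k
        have "J1 (n*p) (Uq (r k)) (Vq (r k)) = (\<Sum>i<n*p. ereal (T (r k) i))"
          unfolding J1_def by (rule sum.cong) (auto simp: TJ)
        also have "\<dots> = ereal (\<Sum>i<n*p. T (r k) i)" by (rule sum_ereal)
        finally show "(\<Sum>i<n*p. T (r k) i) \<le> cr + inverse (real (Suc (r k)))"
          using Q[of "r k"] by simp
      qed
    qed
    have "J1 (n*p) u v \<le> (\<Sum>i<n*p. ereal (t i))"
      unfolding J1_def by (intro sum_mono) (simp add: Jt)
    also have "\<dots> = ereal (\<Sum>i<n*p. t i)" by (rule sum_ereal)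
    also have "\<dots> \<le> c" using sumt cr by simp
    finally have "J1 (n*p) u v \<le> c" .
    then show ?thesis using feas low by (meson order_trans)
  qed
qed


end
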